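(* If $F$ is regular, i.e., $r''$ is bounded above on some interval $(1-\delta,1)$ with $\delta\in(0,1)$, then the limit $\lim_{v\to 1^-} r'(v)$ exists in $[-\infty,\infty)$ and lies in $[-\infty,0]$.
   Context: Let $F$ be a probability distribution on $[0,1]$ with support $[0,1]$ admitting a twice continuously differentiable density $f:(0,1)\to\mathbb{R}_{>0}$, and define the inverse hazard rate $r(v)=(1-F(v))/f(v)$ on $(0,1)$. *)

theory Defs
  imports "HOL-Analysis.Analysis"
begin

definition inv_hazard :: "(real \<Rightarrow> real) \<Rightarrow> (real \<Rightarrow> real) \<Rightarrow> real \<Rightarrow> real" where
  "inv_hazard F f v = (1 - F v) / f v"

definition C2_on_open_unit :: "(real \<Rightarrow> real) \<Rightarrow> bool" where
  "C2_on_open_unit f \<longleftrightarrow>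
     (\<forall>x\<in>{0<..<1}. f differentiable (at x)) \<and>
     (\<forall>x\<in>{0<..<1}. (deriv f) differentiable (at x)) \<and>
     continuous_on {0<..<1} (deriv (deriv f))"

definition regular_dist :: "(real \<Rightarrow> real) \<Rightarrow> (real \<Rightarrow> real) \<Rightarrow> bool" where
  "regular_dist F f \<longleftrightarrow>
     (\<exists>\<delta>. 0 < \<delta> \<and> \<delta> < 1 \<and>
        (\<exists>M. \<forall>v\<in>{1 - \<delta><..<1}. deriv (deriv (inv_hazard F f)) v \<le> M))"

end

theory Submission
  imports Defs
begin

lemma key_contra:
  fixes G f :: "real \<Rightarrow> real" and v1 a :: real
  assumes "v1 < 1" "a > 0" "continuous_on {v1..1} G" "G 1 = 0" "G v1 > 0"
    and "\<And>x. v1 < x \<Longrightarrow> x < 1 \<Longrightarrow> (G has_real_derivative - f x) (at x)"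
    and "\<And>x. v1 < x \<Longrightarrow> x < 1 \<Longrightarrow> a * f x \<le> G x"
  shows False
proof -
  let ?p = "\<lambda>v. G v * exp (v / a)"
  have "?p v1 \<le> ?p 1"
  proof (rule DERIV_nonneg_imp_increasing_open[of v1 1 ?p])
    show "v1 \<le> 1" using assms by simp
    show "continuous_on {v1..1} ?p"
      using assms(2) by (intro continuous_intros assms(3)) auto
    fix x assume x: "v1 < x" "x < 1"
    have e: "((\<lambda>v. exp (v / a)) has_real_derivative exp (x / a) * (1 / a)) (at x)"
      using assms(2) by (auto intro!: derivative_eq_intros simp: field_simps)
    have "(?p has_real_derivative (- f x) * exp (x / a) + (exp (x / a) * (1 / a)) * G x) (at x)"
      by (rule DERIV_mult[OF assms(6)[OF x] e])
    moreover have "0 \<le> (- f x) * exp (x / a) + (exp (x / a) * (1 / a)) * G x"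
    proof -
      have "f x \<le> G x / a" using assms(7)[OF x] assms(2) by (simp add: field_simps)
      then have "0 \<le> G x / a - f x" by simp
      then have "0 \<le> exp (x / a) * (G x / a - f x)" by simp
      then show ?thesis by (simp add: algebra_simps)
    qed
    ultimately show "\<exists>y. (?p has_real_derivative y) (at x) \<and> 0 \<le> y" by blast
  qed
  moreover have "0 < ?p v1" using assms(5) by simp
  ultimately show False using assms(4) by simp
qed

theorem lemma6:
  fixes F f :: "real \<Rightarrow> real"
  assumes dens_pos: "\<forall>v\<in>{0<..<1}. f v > 0"
    and dens_C2: "C2_on_open_unit f"
    and dens_int: "(f has_integral 1) {0..1}"
    and cdf: "\<forall>v\<in>{0..1}. F v = integral {0..v} f"
    and reg: "regular_dist F f"
  shows "\<exists>L::ereal. ((\<lambda>v. ereal (deriv (inv_hazard F f) v)) \<longlongrightarrow> L) (at_left 1)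
           \<and> L \<le> 0"
proof -
  define I0 :: "real set" where "I0 = {0<..<1}"
  define r where "r = inv_hazard F f"
  define f' where "f' = deriv f"
  have oI0: "open I0" unfolding I0_def by simp
  have fint: "f integrable_on {0..1}" using dens_int by blast
  have Fcont: "continuous_on {0..1} F"
    by (rule continuous_on_eq[OF indefinite_integral_continuous_1[OF fint]]) (use cdf in simp)
  have F1: "F 1 = 1" using cdf dens_int by (simp add: integral_unique)
  have fder: "(f has_real_derivative f' x) (at x)" if "x \<in> I0" for x
    using dens_C2 that unfolding C2_on_open_unit_def I0_def f'_def
    by (simp add: DERIV_deriv_iff_real_differentiable)
  have f'der: "(f' has_real_derivative deriv f' x) (at x)" if "x \<in> I0" for x
    using dens_C2 that unfolding C2_on_open_unit_def I0_def f'_def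
    by (simp add: DERIV_deriv_iff_real_differentiable)
  have Fder: "(F has_real_derivative f x) (at x)" if x: "x \<in> I0" for x
  proof -
    have "continuous (at x) f" using fder[OF x] by (rule DERIV_isCont)
    then have "continuous (at x within ({0..1} - {})) f" by (rule continuous_at_imp_continuous_at_within)
    from integral_has_vector_derivative_continuous_at[OF fint _ _ this] x
    have "((\<lambda>u. integral {0..u} f) has_vector_derivative f x) (at x within {0..1})"
      by (simp add: I0_def)
    moreover have "at x within {0..1} = at x"
      using x by (intro at_within_interior) (simp add: I0_def)
    ultimately have "((\<lambda>u. integral {0..u} f) has_real_derivative f x) (at x)"
      by (simp add: has_real_derivative_iff_has_vector_derivative)
    then show ?thesis
      by (rule has_field_derivative_transform_within_open[OF _ oI0 x])
         (use cdf in \<open>auto simp: I0_def\<close>)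
  qed
  define h where "h = (\<lambda>v. ((- f v) * f v - (1 - F v) * f' v) / (f v * f v))"
  have rder: "(r has_real_derivative h x) (at x)" if x: "x \<in> I0" for x
  proof -
    have "f x \<noteq> 0" using dens_pos x unfolding I0_def by (metis less_irrefl)
    have "((\<lambda>v. 1 - F v) has_real_derivative - f x) (at x)"
      using DERIV_diff[OF DERIV_const Fder[OF x]] by simp
    from DERIV_divide[OF this fder[OF x] \<open>f x \<noteq> 0\<close>]
    show ?thesis unfolding r_def h_def inv_hazard_def[abs_def] .
  qed
  have dr: "deriv r x = h x" if "x \<in> I0" for x using rder[OF that] by (rule DERIV_imp_deriv)
  have hdiff: "h differentiable (at x)" if x: "x \<in> I0" for x
  proof -
    have "f x \<noteq> 0" using dens_pos x unfolding I0_def by (metis less_irrefl)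
    have [simp]: "f differentiable (at x)" "f' differentiable (at x)" "F differentiable (at x)"
      using fder[OF x] f'der[OF x] Fder[OF x] real_differentiable_def by blast+
    show ?thesis unfolding h_def using \<open>f x \<noteq> 0\<close> by (auto intro!: derivative_intros)
  qed
  have drder: "(deriv r has_real_derivative deriv (deriv r) x) (at x)" if x: "x \<in> I0" for x
  proof -
    have "(h has_real_derivative deriv h x) (at x)"
      using hdiff[OF x] by (simp add: DERIV_deriv_iff_real_differentiable)
    then have "(deriv r has_real_derivative deriv h x) (at x)"
      by (rule has_field_derivative_transform_within_open[OF _ oI0 x]) (simp add: dr)
    then show ?thesis using DERIV_imp_deriv by metis
  qed
  have Gpos: "F v < 1" if v: "v \<in> I0" for v
  proof -
    have "continuous_on {v..1} F" by (rule continuous_on_subset[OF Fcont]) (use v in \<open>auto simp: I0_def\<close>)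
    moreover have "F differentiable (at x)" if "v < x" "x < 1" for x
      using Fder[of x] that v real_differentiable_def by (auto simp: I0_def)
    ultimately obtain l z where z: "v < z" "z < 1" "(F has_real_derivative l) (at z)" "F 1 - F v = (1 - v) * l"
      using MVT[of v 1 F] v by (auto simp: I0_def)
    have "z \<in> I0" using z v by (auto simp: I0_def)
    then have "l = f z" using z(3) Fder DERIV_unique by blast
    moreover have "f z > 0" using dens_pos \<open>z \<in> I0\<close> unfolding I0_def by blast
    moreover have "0 < 1 - v" using v by (simp add: I0_def)
    ultimately have "0 < (1 - v) * l" by simp
    then show ?thesis using z(4) F1 by simp
  qed
  from reg obtain \<delta> M where \<delta>: "0 < \<delta>" "\<delta> < 1"
    and bnd: "\<forall>v\<in>{1 - \<delta><..<1}. deriv (deriv r) v \<le> M"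
    unfolding regular_dist_def r_def by blast
  define J where "J = {1 - \<delta><..<1}"
  have JI0: "J \<subseteq> I0" using \<delta> by (auto simp: J_def I0_def)
  define g where "g = (\<lambda>v. deriv r v - M * v)"
  have gmono: "g b \<le> g a" if ab: "a \<in> J" "b \<in> J" "a \<le> b" for a b
  proof (rule deriv_nonpos_imp_antimono[of a b g "\<lambda>x. deriv (deriv r) x - M"])
    fix x assume x: "x \<in> {a..b}"
    then have xJ: "x \<in> J" using ab by (auto simp: J_def)
    then have "x \<in> I0" using JI0 by blast
    show "(g has_real_derivative deriv (deriv r) x - M) (at x)"
      unfolding g_def using drder[OF \<open>x \<in> I0\<close>] by (auto intro!: derivative_eq_intros)
    show "deriv (deriv r) x - M \<le> 0" using bnd xJ by (auto simp: J_def)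
  qed (use ab in auto)
  have nonpos: "l \<le> 0" if lim: "(deriv r \<longlongrightarrow> l) (at_left 1)" for l
  proof (rule ccontr)
    assume "\<not> l \<le> 0"
    then have "eventually (\<lambda>v. deriv r v > 0) (at_left 1)"
      using order_tendstoD(1)[OF lim, of 0] by simp
    then obtain b where b: "b < 1" "\<forall>y>b. y < 1 \<longrightarrow> deriv r y > 0"
      by (auto simp: eventually_at_left_field)
    define v1 where "v1 = (max b 0 + 1) / 2"
    have v1: "v1 \<in> I0" "b < v1" using b by (auto simp: v1_def I0_def)
    define a where "a = r v1"
    have fv1: "f v1 > 0" using dens_pos v1 unfolding I0_def by blast
    have "a > 0" using Gpos[OF v1(1)] fv1 by (simp add: a_def r_def inv_hazard_def)
    have rmono: "a \<le> r v" if v: "v1 \<le> v" "v < 1" for v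
    proof (rule deriv_nonneg_imp_mono[of v1 v r h, unfolded a_def[symmetric]])
      fix x assume x: "x \<in> {v1..v}"
      then have "x \<in> I0" using v v1 by (auto simp: I0_def)
      show "(r has_real_derivative h x) (at x)" using rder[OF \<open>x \<in> I0\<close>] .
      have "b < x" "x < 1" using x v v1 by auto
      then have "deriv r x > 0" using b(2) by blast
      then show "0 \<le> h x" using dr[OF \<open>x \<in> I0\<close>] by simp
    qed (use v in auto)
    show False
    proof (rule key_contra[of v1 a "\<lambda>v. 1 - F v" f])
      show "v1 < 1" "0 < a" using v1 \<open>a > 0\<close> by (auto simp: I0_def)
      show "continuous_on {v1..1} (\<lambda>v. 1 - F v)"
        using v1 by (intro continuous_intros continuous_on_subset[OF Fcont]) (auto simp: I0_def)
      show "1 - F 1 = 0" using F1 by simp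
      show "0 < 1 - F v1" using Gpos[OF v1(1)] by simp
      fix x assume x: "v1 < x" "x < 1"
      then have xI: "x \<in> I0" using v1 by (auto simp: I0_def)
      show "((\<lambda>v. 1 - F v) has_real_derivative - f x) (at x)"
        using DERIV_diff[OF DERIV_const Fder[OF xI]] by simp
      have "f x > 0" using dens_pos xI unfolding I0_def by blast
      moreover have "a \<le> (1 - F x) / f x" using rmono[of x] x by (simp add: r_def inv_hazard_def)
      ultimately show "a * f x \<le> 1 - F x" by (simp add: field_simps)
    qed
  qed
  have atl: "at 1 within ({..<1} \<inter> J) = at_left 1"
    by (rule at_within_nhd[of _ "{1 - \<delta><..}"]) (auto simp: J_def \<delta>)
  show ?thesis
  proof (cases "\<exists>B. \<forall>v\<in>J. B \<le> g v")
    case True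
    then obtain B where B: "\<forall>v\<in>J. B \<le> g v" by blast
    define S where "S = Sup ((\<lambda>v. - g v) ` ({..<1} \<inter> J))"
    have "((\<lambda>v. - g v) \<longlongrightarrow> S) (at 1 within ({..<1} \<inter> J))"
      unfolding S_def by (rule Lim_left_bound[where K="-B"]) (use gmono B in auto)
    then have "((\<lambda>v. - g v) \<longlongrightarrow> S) (at_left 1)" by (simp only: atl)
    then have "((\<lambda>v. - (- g v) + M * v) \<longlongrightarrow> - S + M * 1) (at_left 1)"
      by (intro tendsto_intros)
    then have lim: "(deriv r \<longlongrightarrow> - S + M) (at_left 1)" by (simp add: g_def)
    show ?thesis
      using nonpos[OF lim] lim
      by (intro exI[of _ "ereal (- S + M)"]) (simp add: r_def lim_ereal)
  next
    case False
    have "((\<lambda>v. ereal (deriv r v)) \<longlongrightarrow> - \<infinity>) (at_left 1)"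
      unfolding tendsto_MInfty
    proof
      fix c
      from False obtain w where w: "w \<in> J" "g w < c - \<bar>M\<bar>" by (meson not_le)
      have "eventually (\<lambda>v. v \<in> {w<..<1}) (at_left 1)"
        using eventually_at_left_real w by (auto simp: J_def)
      then show "eventually (\<lambda>v. ereal (deriv r v) < ereal c) (at_left 1)"
      proof eventually_elim
        case (elim v)
        then have vJ: "v \<in> J" and "w \<le> v" using w by (auto simp: J_def)
        then have "g v \<le> g w" using gmono w by blast
        have "0 < v" "v < 1" using vJ \<delta> by (auto simp: J_def)
        have "M * v \<le> \<bar>M * v\<bar>" by simp
        also have "\<dots> = \<bar>M\<bar> * v" using \<open>0 < v\<close> by (simp add: abs_mult)
        also have "\<dots> \<le> \<bar>M\<bar>" using \<open>v < 1\<close> by (simp add: mult_left_le)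
        finally have "M * v \<le> \<bar>M\<bar>" .
        then show ?case using \<open>g v \<le> g w\<close> w by (simp add: g_def)
      qed
    qed
    then show ?thesis by (intro exI[of _ "- \<infinity>"]) (simp add: r_def)
  qed
qed

end
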